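(* Let $G$ be a connected weighted graph and $d$ a positive integer. Up to isomorphism over $G$, there are finitely many unramified harmonic morphisms $\varphi:G'\to G$ of degree $d$ from connected weighted graphs $G'$.
   Context: A graph $G$ consists of a finite set $X(G)$, an idempotent root map $r:X(G)\to X(G)$ and an involution $\iota:X(G)\to X(G)$ fixing $r(X(G))$ pointwise. $V(G)=r(X(G))$ are the vertices, $H(G)=X(G)\setminus V(G)$ the half-edges; $\iota$-orbits of size 2 in $H(G)$ are edges, fixed points are legs. $T_vG=\{h\in H(G): r(h)=v\}$, $\mathrm{val}(v)=\#T_vG$. A weighted graph has $g:V(G)\to\mathbb{Z}_{\ge0}$; $\chi(v)=2-2g(v)-\mathrm{val}(v)$. A morphism $\varphi:G'\to G$ is a map $X(G')\to X(G)$ commuting with $r$ and $\iota$ sending each edge to an edge or a vertex. It is harmonic if equipped with $d_\varphi:X(G')\to\mathbb{Z}_{\ge0}$ such that $d_\varphi$ agrees on the two halves of an edge, $d_\varphi(h')=0$ iff $\varphi(h')$ is a vertex, and for each $v'\in V(G')$ and each $h\in T_{\varphi(v')}G$, $d_\varphi(v')=\sum_{h'\in T_{v'}G',\varphi(h')=h}d_\varphi(h')$. Its degree is $\sum_{\varphi(v')=v}d_\varphi(v')$ (independent of $v$ for connected $G$). It is finite if $d_\varphi>0$ on all half-edges, and unramified if it is finite and $d_\varphi(v')\chi(\varphi(v'))-\chi(v')=0$ for all $v'\in V(G')$. *)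

theory Defs
  imports Main
begin

text \<open>A graph: set X(G) with root map r and involution iota. A weighted graph
additionally carries a genus function (only its values on vertices matter).\<close>

record 'a graph =
  X :: "'a set"
  r :: "'a \<Rightarrow> 'a"
  iota :: "'a \<Rightarrow> 'a"

record 'a wgraph = "'a graph" +
  genus :: "'a \<Rightarrow> nat"

definition is_graph :: "('a, 'z) graph_scheme \<Rightarrow> bool" where
  "is_graph G \<longleftrightarrow> finite (X G) \<and>
     (\<forall>x\<in>X G. r G x \<in> X G \<and> r G (r G x) = r G x \<and>
               iota G x \<in> X G \<and> iota G (iota G x) = x \<and>
               iota G (r G x) = r G x)"

definition V :: "('a, 'z) graph_scheme \<Rightarrow> 'a set" where
  "V G = r G ` X G"

definition H :: "('a, 'z) graph_scheme \<Rightarrow> 'a set" where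
  "H G = X G - V G"

definition T :: "('a, 'z) graph_scheme \<Rightarrow> 'a \<Rightarrow> 'a set" where
  "T G v = {h \<in> H G. r G h = v}"

definition val :: "('a, 'z) graph_scheme \<Rightarrow> 'a \<Rightarrow> nat" where
  "val G v = card (T G v)"

definition chi :: "('a, 'z) wgraph_scheme \<Rightarrow> 'a \<Rightarrow> int" where
  "chi G v = 2 - 2 * int (genus G v) - int (val G v)"

definition adj :: "('a, 'z) graph_scheme \<Rightarrow> ('a \<times> 'a) set" where
  "adj G = {(r G h, r G (iota G h)) | h. h \<in> H G \<and> iota G h \<noteq> h}"

definition connected :: "('a, 'z) graph_scheme \<Rightarrow> bool" where
  "connected G \<longleftrightarrow> V G \<noteq> {} \<and> (\<forall>v\<in>V G. \<forall>w\<in>V G. (v, w) \<in> (adj G)\<^sup>*)"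

definition morphism :: "('b, 'y) graph_scheme \<Rightarrow> ('a, 'z) graph_scheme \<Rightarrow> ('b \<Rightarrow> 'a) \<Rightarrow> bool" where
  "morphism G' G \<phi> \<longleftrightarrow>
     (\<forall>x\<in>X G'. \<phi> x \<in> X G \<and> \<phi> (r G' x) = r G (\<phi> x) \<and> \<phi> (iota G' x) = iota G (\<phi> x)) \<and>
     (\<forall>h\<in>H G'. iota G' h \<noteq> h \<longrightarrow> \<phi> h \<in> V G \<or> iota G (\<phi> h) \<noteq> \<phi> h)"

definition harmonic :: "('b, 'y) graph_scheme \<Rightarrow> ('a, 'z) graph_scheme \<Rightarrow> ('b \<Rightarrow> 'a) \<Rightarrow> ('b \<Rightarrow> nat) \<Rightarrow> bool" where
  "harmonic G' G \<phi> d \<longleftrightarrow> morphism G' G \<phi> \<and>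
     (\<forall>h\<in>H G'. d (iota G' h) = d h) \<and>
     (\<forall>h\<in>H G'. d h = 0 \<longleftrightarrow> \<phi> h \<in> V G) \<and>
     (\<forall>v\<in>V G'. \<forall>h\<in>T G (\<phi> v). d v = (\<Sum>h'\<in>{h'\<in>T G' v. \<phi> h' = h}. d h'))"

text \<open>Degree (for connected G the sum is independent of v; we require it for every v).\<close>
definition has_degree :: "('b, 'y) graph_scheme \<Rightarrow> ('a, 'z) graph_scheme \<Rightarrow> ('b \<Rightarrow> 'a) \<Rightarrow> ('b \<Rightarrow> nat) \<Rightarrow> nat \<Rightarrow> bool" where
  "has_degree G' G \<phi> d n \<longleftrightarrow> (\<forall>v\<in>V G. (\<Sum>v'\<in>{v'\<in>V G'. \<phi> v' = v}. d v') = n)"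

definition finite_morph :: "('b, 'y) graph_scheme \<Rightarrow> ('b \<Rightarrow> nat) \<Rightarrow> bool" where
  "finite_morph G' d \<longleftrightarrow> (\<forall>h\<in>H G'. d h > 0)"

definition unramified :: "('b, 'y) wgraph_scheme \<Rightarrow> ('a, 'z) wgraph_scheme \<Rightarrow> ('b \<Rightarrow> 'a) \<Rightarrow> ('b \<Rightarrow> nat) \<Rightarrow> bool" where
  "unramified G' G \<phi> d \<longleftrightarrow> finite_morph G' d \<and>
     (\<forall>v'\<in>V G'. int (d v') * chi G (\<phi> v') - chi G' v' = 0)"

definition iso_over :: "('b, 'y) wgraph_scheme \<Rightarrow> ('b \<Rightarrow> 'a) \<Rightarrow> ('b \<Rightarrow> nat) \<Rightarrow>
                        ('c, 'x) wgraph_scheme \<Rightarrow> ('c \<Rightarrow> 'a) \<Rightarrow> ('c \<Rightarrow> nat) \<Rightarrow> bool" where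
  "iso_over G1 \<phi>1 d1 G2 \<phi>2 d2 \<longleftrightarrow> (\<exists>\<psi>. bij_betw \<psi> (X G1) (X G2) \<and>
     (\<forall>x\<in>X G1. \<psi> (r G1 x) = r G2 (\<psi> x) \<and> \<psi> (iota G1 x) = iota G2 (\<psi> x) \<and>
                \<phi>2 (\<psi> x) = \<phi>1 x \<and> d2 (\<psi> x) = d1 x) \<and>
     (\<forall>v\<in>V G1. genus G2 (\<psi> v) = genus G1 v))"

end

theory Submission
  imports Defs
begin

definition enum_of :: "'b set \<Rightarrow> nat \<Rightarrow> 'b" where
  "enum_of A = (SOME e. bij_betw e {0..<card A} A)"

lemma enum_of_bij: "finite A \<Longrightarrow> bij_betw (enum_of A) {0..<card A} A"
  unfolding enum_of_def by (rule someI_ex[OF ex_bij_betw_nat_finite])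

definition code :: "('b wgraph \<times> ('b \<Rightarrow> 'a) \<times> ('b \<Rightarrow> nat)) \<Rightarrow> (nat \<times> nat \<times> 'a \<times> nat \<times> nat) list" where
  "code t = (case t of (G', \<phi>, dd) \<Rightarrow>
     map (\<lambda>i. (inv_into {0..<card (X G')} (enum_of (X G')) (r G' (enum_of (X G') i)),
               inv_into {0..<card (X G')} (enum_of (X G')) (iota G' (enum_of (X G') i)),
               \<phi> (enum_of (X G') i), dd (enum_of (X G') i),
               if enum_of (X G') i \<in> V G' then genus G' (enum_of (X G') i) else 0)) [0..<card (X G')])"

lemma code_iso:
  fixes G1 G2 :: "'b wgraph"
  assumes g1: "is_graph G1" and g2: "is_graph G2"
    and c: "code (G1, \<phi>1, d1) = code (G2, \<phi>2, d2)"
  shows "iso_over G1 \<phi>1 d1 G2 \<phi>2 d2"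
proof -
  define n where "n = card (X G1)"
  define e1 where "e1 = enum_of (X G1)"
  define e2 where "e2 = enum_of (X G2)"
  have f1: "finite (X G1)" and f2: "finite (X G2)" using g1 g2 by (auto simp: is_graph_def)
  have nn: "card (X G2) = n" using arg_cong[OF c, of length] by (simp add: code_def n_def)
  have b1: "bij_betw e1 {0..<n} (X G1)" using enum_of_bij[OF f1] by (simp add: e1_def n_def)
  have b2: "bij_betw e2 {0..<n} (X G2)" using enum_of_bij[OF f2] nn by (simp add: e2_def)
  have c': "map (\<lambda>i. (inv_into {0..<n} e1 (r G1 (e1 i)), inv_into {0..<n} e1 (iota G1 (e1 i)),
               \<phi>1 (e1 i), d1 (e1 i), if e1 i \<in> V G1 then genus G1 (e1 i) else 0)) [0..<n]
          = map (\<lambda>i. (inv_into {0..<n} e2 (r G2 (e2 i)), inv_into {0..<n} e2 (iota G2 (e2 i)),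
               \<phi>2 (e2 i), d2 (e2 i), if e2 i \<in> V G2 then genus G2 (e2 i) else 0)) [0..<n]"
  proof -
    have "code (G1, \<phi>1, d1) = map (\<lambda>i. (inv_into {0..<n} e1 (r G1 (e1 i)), inv_into {0..<n} e1 (iota G1 (e1 i)),
               \<phi>1 (e1 i), d1 (e1 i), if e1 i \<in> V G1 then genus G1 (e1 i) else 0)) [0..<n]"
      by (simp add: code_def n_def e1_def)
    moreover have "code (G2, \<phi>2, d2) = map (\<lambda>i. (inv_into {0..<n} e2 (r G2 (e2 i)), inv_into {0..<n} e2 (iota G2 (e2 i)),
               \<phi>2 (e2 i), d2 (e2 i), if e2 i \<in> V G2 then genus G2 (e2 i) else 0)) [0..<n]"
      by (simp add: code_def nn[symmetric] e2_def)
    ultimately show ?thesis using c by metis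
  qed
  then have ci: "\<And>i. i < n \<Longrightarrow> inv_into {0..<n} e1 (r G1 (e1 i)) = inv_into {0..<n} e2 (r G2 (e2 i)) \<and>
      inv_into {0..<n} e1 (iota G1 (e1 i)) = inv_into {0..<n} e2 (iota G2 (e2 i)) \<and>
      \<phi>1 (e1 i) = \<phi>2 (e2 i) \<and> d1 (e1 i) = d2 (e2 i) \<and>
      (if e1 i \<in> V G1 then genus G1 (e1 i) else 0) = (if e2 i \<in> V G2 then genus G2 (e2 i) else 0)"
  proof -
    fix i assume "i < n"
    then have "i \<in> set [0..<n]" by simp
    then show "?thesis i" using c' unfolding map_eq_conv by (simp only: prod.inject)
  qed
  define \<psi> where "\<psi> = e2 \<circ> inv_into {0..<n} e1"
  have bpsi: "bij_betw \<psi> (X G1) (X G2)" unfolding \<psi>_def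
    using bij_betw_trans[OF bij_betw_inv_into[OF b1] b2] .
  have key: "\<And>y. y \<in> X G2 \<Longrightarrow> e2 (inv_into {0..<n} e2 y) = y"
    using b2 by (simp add: bij_betw_def f_inv_into_f)
  have pt: "\<psi> (r G1 x) = r G2 (\<psi> x) \<and> \<psi> (iota G1 x) = iota G2 (\<psi> x) \<and>
                \<phi>2 (\<psi> x) = \<phi>1 x \<and> d2 (\<psi> x) = d1 x" if x: "x \<in> X G1" for x
  proof -
    define i where "i = inv_into {0..<n} e1 x"
    have i: "i < n" using bij_betw_inv_into[OF b1] x unfolding i_def bij_betw_def by auto
    have xi: "e1 i = x" using b1 x unfolding i_def bij_betw_def by (simp add: f_inv_into_f)
    have pi: "\<psi> x = e2 i" by (simp add: \<psi>_def i_def)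
    have e2i: "e2 i \<in> X G2" using b2 i unfolding bij_betw_def by auto
    have rx: "r G2 (e2 i) \<in> X G2" "iota G2 (e2 i) \<in> X G2" using g2 e2i by (auto simp: is_graph_def)
    show ?thesis using ci[OF i] xi pi key[OF rx(1)] key[OF rx(2)] by (auto simp: \<psi>_def)
  qed
  have pg: "genus G2 (\<psi> v) = genus G1 v" if v: "v \<in> V G1" for v
  proof -
    have vx: "v \<in> X G1" and rv: "r G1 v = v" using v g1 by (auto simp: V_def is_graph_def)
    define i where "i = inv_into {0..<n} e1 v"
    have i: "i < n" using bij_betw_inv_into[OF b1] vx unfolding i_def bij_betw_def by auto
    have xi: "e1 i = v" using b1 vx unfolding i_def bij_betw_def by (simp add: f_inv_into_f)
    have pi: "\<psi> v = e2 i" by (simp add: \<psi>_def i_def)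
    have "\<psi> v \<in> X G2" using bpsi vx by (auto simp: bij_betw_def)
    moreover have "r G2 (\<psi> v) = \<psi> v" using pt[OF vx] rv by simp
    ultimately have "\<psi> v \<in> V G2" unfolding V_def by (metis image_eqI)
    then show ?thesis using ci[OF i] xi pi v by simp
  qed
  show ?thesis unfolding iso_over_def using bpsi pt pg by blast
qed


lemma card_le_sum_pos:
  fixes f :: "'c \<Rightarrow> nat"
  assumes "finite A" "\<And>a. a \<in> A \<Longrightarrow> f a \<ge> 1"
  shows "card A \<le> sum f A"
proof -
  have "card A = (\<Sum>a\<in>A. (1::nat))" by simp
  also have "\<dots> \<le> sum f A" using assms(2) by (rule sum_mono)
  finally show ?thesis .
qed

lemma bounds:
  fixes G :: "'a wgraph" and G' :: "'b wgraph"
  assumes gG: "is_graph G" and gG': "is_graph G'" and conn: "connected G'"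
    and harm: "harmonic G' G \<phi> dd" and unr: "unramified G' G \<phi> dd"
    and deg: "has_degree G' G \<phi> dd d" and dpos: "0 < d"
  shows "card (X G') \<le> card (X G) * d + card (X G) * d * (card (X G) * d)"
    and "\<forall>x\<in>X G'. dd x \<le> d"
    and "\<forall>v\<in>V G'. genus G' v \<le> 1 + d * (sum (genus G) (X G) + card (X G))"
    and "\<forall>x\<in>X G'. \<phi> x \<in> X G"
proof -
  have finG: "finite (X G)" and finG': "finite (X G')" using gG gG' by (auto simp: is_graph_def)
  have VX: "V G \<subseteq> X G" using gG by (auto simp: V_def is_graph_def)
  have VX': "V G' \<subseteq> X G'" using gG' by (auto simp: V_def is_graph_def)
  have HX: "H G \<subseteq> X G" "H G' \<subseteq> X G'" by (auto simp: H_def)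
  have rV': "\<And>x. x \<in> X G' \<Longrightarrow> r G' x \<in> V G'" by (auto simp: V_def)
  have rr': "\<And>v. v \<in> V G' \<Longrightarrow> r G' v = v" using gG' by (auto simp: V_def is_graph_def)
  have mor: "morphism G' G \<phi>" using harm by (simp add: harmonic_def)
  show phX: "\<forall>x\<in>X G'. \<phi> x \<in> X G" using mor by (simp add: morphism_def)
  have phr: "\<And>x. x \<in> X G' \<Longrightarrow> \<phi> (r G' x) = r G (\<phi> x)" using mor by (simp add: morphism_def)
  have phV: "\<And>v. v \<in> V G' \<Longrightarrow> \<phi> v \<in> V G"
  proof -
    fix v assume v: "v \<in> V G'"
    then have "\<phi> v = r G (\<phi> v)" using phr[of v] rr'[OF v] VX' by auto
    then show "\<phi> v \<in> V G" using phX v VX' unfolding V_def by (metis image_eqI subsetD)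
  qed
  have fm: "\<And>h. h \<in> H G' \<Longrightarrow> dd h > 0" using unr by (simp add: unramified_def finite_morph_def)
  have dz: "\<And>h. h \<in> H G' \<Longrightarrow> dd h = 0 \<longleftrightarrow> \<phi> h \<in> V G" using harm by (simp add: harmonic_def)
  have hsum: "\<And>v h. v \<in> V G' \<Longrightarrow> h \<in> T G (\<phi> v) \<Longrightarrow> dd v = (\<Sum>h'\<in>{h'\<in>T G' v. \<phi> h' = h}. dd h')"
    using harm by (simp add: harmonic_def)
  have phT: "\<phi> h \<in> T G (\<phi> (r G' h))" if h: "h \<in> H G'" for h
  proof -
    have "\<phi> h \<notin> V G" using dz[OF h] fm[OF h] by auto
    moreover have "\<phi> h \<in> X G" using phX h HX by auto
    moreover have "r G (\<phi> h) = \<phi> (r G' h)" using phr h HX by auto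
    ultimately show ?thesis by (simp add: T_def H_def)
  qed
  have finT': "\<And>v. finite (T G' v)" using finG' HX by (auto simp: T_def intro: finite_subset)
  have finblk: "\<And>v P. finite {h'\<in>T G' v. P h'}" using finT' by (auto intro: finite_subset[rotated])
  have degv: "\<And>v. v \<in> V G \<Longrightarrow> (\<Sum>v'\<in>{v'\<in>V G'. \<phi> v' = v}. dd v') = d"
    using deg by (simp add: has_degree_def)
  have finfib: "\<And>v. finite {v'\<in>V G'. \<phi> v' = v}" using finG' VX' by (auto intro: finite_subset)
  have ddV: "dd v \<le> d" if v: "v \<in> V G'" for v
  proof -
    have "dd v \<le> (\<Sum>v'\<in>{v'\<in>V G'. \<phi> v' = \<phi> v}. dd v')"
      by (rule member_le_sum) (use v finfib in auto)
    then show ?thesis using degv[OF phV[OF v]] by simp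
  qed
  have ddH: "dd h \<le> dd (r G' h)" if h: "h \<in> H G'" for h
  proof -
    have rv: "r G' h \<in> V G'" using rV' h HX by auto
    have "dd h \<le> (\<Sum>h'\<in>{h'\<in>T G' (r G' h). \<phi> h' = \<phi> h}. dd h')"
      by (rule member_le_sum) (use h finblk in \<open>auto simp: T_def\<close>)
    then show ?thesis using hsum[OF rv phT[OF h]] by simp
  qed
  have XVH: "X G' = V G' \<union> H G'" using VX' by (auto simp: H_def)
  show "\<forall>x\<in>X G'. dd x \<le> d"
  proof
    fix x assume x: "x \<in> X G'"
    show "dd x \<le> d"
    proof (cases "x \<in> V G'")
      case True then show ?thesis using ddV by simp
    next
      case False then have h: "x \<in> H G'" using x XVH by auto
      then show ?thesis using ddH[OF h] ddV[OF rV'[of x]] x by simp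
    qed
  qed
  have ddpos: "dd v \<ge> 1" if v: "v \<in> V G'" for v
  proof (cases "T G' v = {}")
    case False
    then obtain h where h: "h \<in> T G' v" by auto
    then have "h \<in> H G'" "r G' h = v" by (auto simp: T_def)
    then show ?thesis using ddH fm by (metis less_one not_less order.trans)
  next
    case True
    have single: "V G' = {v}"
    proof
      show "V G' \<subseteq> {v}"
      proof
        fix w assume w: "w \<in> V G'"
        have "(v, w) \<in> (adj G')\<^sup>*" using conn v w by (simp add: connected_def)
        then show "w \<in> {v}"
        proof (cases rule: converse_rtranclE)
          case base then show ?thesis by simp
        next
          case (step u)
          then obtain h where "h \<in> H G'" "r G' h = v" by (auto simp: adj_def)
          then have "h \<in> T G' v" by (simp add: T_def)
          then show ?thesis using True by simp
        qed
      qed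
    qed (use v in simp)
    have "{v'\<in>V G'. \<phi> v' = \<phi> v} = {v}" using single by auto
    then show ?thesis using degv[OF phV[OF v]] dpos by simp
  qed
  have cardfib: "card {v'\<in>V G'. \<phi> v' = v} \<le> d" if v: "v \<in> V G" for v
    using card_le_sum_pos[OF finfib, of v dd] ddpos degv[OF v] by auto
  have cV': "card (V G') \<le> card (X G) * d"
  proof -
    have eqV: "V G' = (\<Union>v\<in>V G. {v'\<in>V G'. \<phi> v' = v})" using phV by auto
    have fV: "finite (V G)" by (rule finite_subset[OF VX finG])
    have "card (V G') = card (\<Union>v\<in>V G. {v'\<in>V G'. \<phi> v' = v})" using eqV by (rule arg_cong)
    also have "\<dots> \<le> (\<Sum>v\<in>V G. card {v'\<in>V G'. \<phi> v' = v})"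
      by (rule card_UN_le[OF fV])
    also have "\<dots> \<le> card (V G) * d" using sum_bounded_above[of "V G" _ d] cardfib by simp
    also have "\<dots> \<le> card (X G) * d" using card_mono[OF finG VX] by simp
    finally show ?thesis .
  qed
  have cblock: "card {h'\<in>T G' v. \<phi> h' = h} \<le> d" if v: "v \<in> V G'" and h: "h \<in> T G (\<phi> v)" for v h
  proof -
    have "card {h'\<in>T G' v. \<phi> h' = h} \<le> (\<Sum>h'\<in>{h'\<in>T G' v. \<phi> h' = h}. dd h')"
      by (rule card_le_sum_pos[OF finblk]) (use fm in \<open>auto simp: T_def Suc_le_eq\<close>)
    then show ?thesis using hsum[OF v h] ddV[OF v] by simp
  qed
  have cH': "card (H G') \<le> card (X G) * d * (card (X G) * d)"
  proof -
    have eqH: "H G' = (\<Union>v\<in>V G'. \<Union>h\<in>T G (\<phi> v). {h'\<in>T G' v. \<phi> h' = h})"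
    proof
      show "H G' \<subseteq> (\<Union>v\<in>V G'. \<Union>h\<in>T G (\<phi> v). {h'\<in>T G' v. \<phi> h' = h})"
      proof
        fix h assume h: "h \<in> H G'"
        then show "h \<in> (\<Union>v\<in>V G'. \<Union>h\<in>T G (\<phi> v). {h'\<in>T G' v. \<phi> h' = h})"
          using phT[OF h] rV'[of h] HX by (auto simp: T_def)
      qed
    qed (auto simp: T_def)
    have finV': "finite (V G')" by (rule finite_subset[OF VX' finG'])
    have finTG: "\<And>w. finite (T G w)" using finG HX by (auto simp: T_def intro: finite_subset)
    have "card (H G') = card (\<Union>v\<in>V G'. \<Union>h\<in>T G (\<phi> v). {h'\<in>T G' v. \<phi> h' = h})"
      using eqH by (rule arg_cong)
    also have "\<dots> \<le> (\<Sum>v\<in>V G'. card (\<Union>h\<in>T G (\<phi> v). {h'\<in>T G' v. \<phi> h' = h}))"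
      by (rule card_UN_le[OF finV'])
    also have "\<dots> \<le> (\<Sum>v\<in>V G'. card (X G) * d)"
    proof (rule sum_mono)
      fix v assume v: "v \<in> V G'"
      have "card (\<Union>h\<in>T G (\<phi> v). {h'\<in>T G' v. \<phi> h' = h}) \<le> (\<Sum>h\<in>T G (\<phi> v). card {h'\<in>T G' v. \<phi> h' = h})"
        by (rule card_UN_le[OF finTG])
      also have "\<dots> \<le> card (T G (\<phi> v)) * d" using sum_bounded_above[of "T G (\<phi> v)" _ d] cblock[OF v] by simp
      also have "\<dots> \<le> card (X G) * d"
        using card_mono[OF finG, of "T G (\<phi> v)"] HX by (auto simp: T_def)
      finally show "card (\<Union>h\<in>T G (\<phi> v). {h'\<in>T G' v. \<phi> h' = h}) \<le> card (X G) * d" .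
    qed
    also have "\<dots> = card (V G') * (card (X G) * d)" by simp
    also have "\<dots> \<le> card (X G) * d * (card (X G) * d)" using cV' by simp
    finally show ?thesis .
  qed
  show "card (X G') \<le> card (X G) * d + card (X G) * d * (card (X G) * d)"
    using card_Un_le[of "V G'" "H G'"] XVH cV' cH' by simp
  show "\<forall>v\<in>V G'. genus G' v \<le> 1 + d * (sum (genus G) (X G) + card (X G))"
  proof
    fix v assume v: "v \<in> V G'"
    define w where "w = \<phi> v"
    define B where "B = sum (genus G) (X G)"
    define K where "K = card (X G)"
    have w: "w \<in> V G" using phV[OF v] by (simp add: w_def)
    have eq: "int (dd v) * chi G w = chi G' v" using unr v by (simp add: unramified_def w_def)
    have gw: "genus G w \<le> B" unfolding B_def using member_le_sum[of w "X G" "genus G"] w VX finG by auto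
    have vw: "val G w \<le> K" unfolding val_def T_def H_def K_def by (rule card_mono[OF finG]) auto
    have "int (dd v) * (2 * int (genus G w) + int (val G w)) \<le> int d * (2 * int B + 2 * int K)"
      by (rule mult_mono) (use ddV[OF v] gw vw in auto)
    moreover have "int (dd v) * chi G w = 2 * int (dd v) - int (dd v) * (2 * int (genus G w) + int (val G w))"
      by (simp add: chi_def algebra_simps)
    moreover have "chi G' v = 2 - 2 * int (genus G' v) - int (val G' v)" by (simp add: chi_def)
    ultimately have "2 * int (genus G' v) \<le> 2 + int d * (2 * int B + 2 * int K)"
      using eq by linarith
    then have "int (genus G' v) \<le> 1 + int d * (int B + int K)"
      by (simp add: algebra_simps)
    then have "int (genus G' v) \<le> int (1 + d * (B + K))" by simp
    then have "genus G' v \<le> 1 + d * (B + K)" by (simp only: of_nat_le_iff)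
    then show "genus G' v \<le> 1 + d * (sum (genus G) (X G) + card (X G))" by (simp add: B_def K_def)
  qed
qed


lemma code_in:
  fixes G :: "'a wgraph" and G' :: "'b wgraph"
  assumes gG: "is_graph G" and gG': "is_graph G'" and conn: "connected G'"
    and harm: "harmonic G' G \<phi> dd" and unr: "unramified G' G \<phi> dd"
    and deg: "has_degree G' G \<phi> dd d" and dpos: "0 < d"
  shows "code (G', \<phi>, dd) \<in> {xs. set xs \<subseteq> {0..<card (X G) * d + card (X G) * d * (card (X G) * d)} \<times>
       {0..<card (X G) * d + card (X G) * d * (card (X G) * d)} \<times> X G \<times> {0..d} \<times>
       {0..1 + d * (sum (genus G) (X G) + card (X G))} \<and>
       length xs \<le> card (X G) * d + card (X G) * d * (card (X G) * d)}"
proof -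
  note b = bounds[OF assms]
  define n where "n = card (X G')"
  define e where "e = enum_of (X G')"
  have fin: "finite (X G')" using gG' by (simp add: is_graph_def)
  have be: "bij_betw e {0..<n} (X G')" using enum_of_bij[OF fin] by (simp add: e_def n_def)
  have bi: "bij_betw (inv_into {0..<n} e) (X G') {0..<n}" by (rule bij_betw_inv_into[OF be])
  have ex: "\<And>i. i < n \<Longrightarrow> e i \<in> X G'" using be by (auto simp: bij_betw_def)
  have ri: "\<And>i. i < n \<Longrightarrow> r G' (e i) \<in> X G' \<and> iota G' (e i) \<in> X G'"
    using ex gG' by (auto simp: is_graph_def)
  have ii: "\<And>y. y \<in> X G' \<Longrightarrow> inv_into {0..<n} e y < n" using bi by (auto simp: bij_betw_def)
  have VX': "V G' \<subseteq> X G'" using gG' by (auto simp: V_def is_graph_def)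
  have cd: "code (G', \<phi>, dd) = map (\<lambda>i. (inv_into {0..<n} e (r G' (e i)), inv_into {0..<n} e (iota G' (e i)),
               \<phi> (e i), dd (e i), if e i \<in> V G' then genus G' (e i) else 0)) [0..<n]"
    by (simp add: code_def n_def e_def)
  define N where "N = card (X G) * d + card (X G) * d * (card (X G) * d)"
  define gB where "gB = 1 + d * (sum (genus G) (X G) + card (X G))"
  have nN: "n \<le> N" using b(1) by (simp add: n_def N_def)
  have comp: "(inv_into {0..<n} e (r G' (e i)), inv_into {0..<n} e (iota G' (e i)),
               \<phi> (e i), dd (e i), if e i \<in> V G' then genus G' (e i) else 0)
       \<in> {0..<N} \<times> {0..<N} \<times> X G \<times> {0..d} \<times> {0..gB}" if i: "i < n" for i
  proof -
    have a1: "inv_into {0..<n} e (r G' (e i)) \<in> {0..<N}" using ii[of "r G' (e i)"] ri[OF i] nN by simp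
    have a2: "inv_into {0..<n} e (iota G' (e i)) \<in> {0..<N}" using ii[of "iota G' (e i)"] ri[OF i] nN by simp
    have a3: "\<phi> (e i) \<in> X G" using b(4) ex[OF i] by blast
    have a4: "dd (e i) \<in> {0..d}" using b(2) ex[OF i] by simp
    have a5: "(if e i \<in> V G' then genus G' (e i) else 0) \<in> {0..gB}" using b(3) unfolding gB_def by simp
    show ?thesis using a1 a2 a3 a4 a5 by blast
  qed
  have "set (code (G', \<phi>, dd)) \<subseteq> {0..<N} \<times> {0..<N} \<times> X G \<times> {0..d} \<times> {0..gB}"
    unfolding cd using comp by auto
  moreover have "length (code (G', \<phi>, dd)) \<le> N" unfolding cd using nN by simp
  ultimately show ?thesis unfolding N_def gB_def by blast
qed

theorem proposition2p21:
  fixes G :: "'a wgraph" and d :: nat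
  assumes "is_graph G" and "connected G" and "0 < d"
  shows "\<exists>S :: ('b wgraph \<times> ('b \<Rightarrow> 'a) \<times> ('b \<Rightarrow> nat)) set. finite S \<and>
           (\<forall>(G' :: 'b wgraph) \<phi> d\<phi>.
              is_graph G' \<and> connected G' \<and> harmonic G' G \<phi> d\<phi> \<and>
              unramified G' G \<phi> d\<phi> \<and> has_degree G' G \<phi> d\<phi> d \<longrightarrow>
              (\<exists>(G2, \<phi>2, d2) \<in> S. iso_over G' \<phi> d\<phi> G2 \<phi>2 d2))"
proof -
  define N where "N = card (X G) * d + card (X G) * d * (card (X G) * d)"
  define C where "C = {xs. set xs \<subseteq> {0..<N} \<times> {0..<N} \<times> X G \<times> {0..d} \<times>
       {0..1 + d * (sum (genus G) (X G) + card (X G))} \<and> length xs \<le> N}"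
  define P where "P = (\<lambda>(t :: 'b wgraph \<times> ('b \<Rightarrow> 'a) \<times> ('b \<Rightarrow> nat)). case t of (G', \<phi>, d\<phi>) \<Rightarrow>
     is_graph G' \<and> connected G' \<and> harmonic G' G \<phi> d\<phi> \<and>
              unramified G' G \<phi> d\<phi> \<and> has_degree G' G \<phi> d\<phi> d)"
  define S where "S = (\<lambda>c. SOME t. P t \<and> code t = c) ` C"
  have finC: "finite C" unfolding C_def
    by (rule finite_lists_length_le) (use assms(1) in \<open>simp add: is_graph_def\<close>)
  have "finite S" unfolding S_def using finC by simp
  moreover have "\<exists>(G2, \<phi>2, d2) \<in> S. iso_over G' \<phi> d\<phi> G2 \<phi>2 d2"
    if h: "is_graph G' \<and> connected G' \<and> harmonic G' G \<phi> d\<phi> \<and>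
              unramified G' G \<phi> d\<phi> \<and> has_degree G' G \<phi> d\<phi> d" for G' :: "'b wgraph" and \<phi> d\<phi>
  proof -
    have cin: "code (G', \<phi>, d\<phi>) \<in> C" unfolding C_def N_def
      by (rule code_in) (use h assms in auto)
    define t where "t = (SOME t. P t \<and> code t = code (G', \<phi>, d\<phi>))"
    have Pt: "P (G', \<phi>, d\<phi>)" using h by (simp add: P_def)
    have "P t \<and> code t = code (G', \<phi>, d\<phi>)" unfolding t_def
      by (rule someI[of _ "(G', \<phi>, d\<phi>)"]) (use Pt in simp)
    moreover obtain G2 \<phi>2 d2 where tt: "t = (G2, \<phi>2, d2)" by (cases t) auto
    ultimately have g2: "is_graph G2" and cc: "code (G', \<phi>, d\<phi>) = code (G2, \<phi>2, d2)"
      by (auto simp: P_def)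
    have "iso_over G' \<phi> d\<phi> G2 \<phi>2 d2" by (rule code_iso[OF _ g2 cc]) (use h in simp)
    moreover have "t \<in> S" unfolding S_def t_def using cin by blast
    ultimately show ?thesis using tt by blast
  qed
  ultimately show ?thesis by blast
qed

end
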